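(* Let $d\ge1$ and consider the cubical cell structure on $\mathbb{R}^d$ given by $\mathbb{Z}^d$. For every integer $m\ge 1$ and all $\mathbb{Z}_2$-valued cochains $\alpha,\beta$ on this cell structure, $$\delta(\alpha\cup_m\beta)=\delta\alpha\cup_m\beta+\alpha\cup_m\delta\beta+\alpha\cup_{m-1}\beta+\beta\cup_{m-1}\alpha,$$ where $\cup_m$ are the hypercubic higher cup products defined in the context.
   Context: Cell structure: the $k$-cells are the integer translates of the $k$-dimensional faces of unit cubes of $\mathbb{Z}^d$. A $k$-cell $c$ spans coordinate directions $i_1<\dots<i_k$. Its subcells are labelled by words $w\in\{+,-,\bullet\}^k$: the cell $c(w)$ fixes $x_{i_r}$ at its maximal (resp. minimal) value on $c$ when $w_r=+$ (resp. $-$), and lets $x_{i_r}$ vary when $w_r=\bullet$. A $\mathbb{Z}_2$-valued $p$-cochain is a function from $p$-cells to $\mathbb{Z}_2$, taken to be zero on cells of other dimensions. The coboundary is $(\delta\alpha)(c)=\sum\alpha(c(w))$ over the words $w$ with exactly one entry in $\{+,-\}$. Higher cup products: for $m\ge0$, a $p$-cochain $\alpha$ and a $q$-cochain $\beta$, and a $k$-cell $c$ with $k=p+q-m$, $$(\alpha\cup_m\beta)(c)=\sum_{1\le l_1<\dots<l_m\le k}\sum_{(w,w')}\alpha(c(w))\beta(c(w')).$$ The inner sum runs over pairs of words with $w_{l_r}=w'_{l_r}=\bullet$ for all $r$. For each position $s\notin\{l_r\}$, let $\ell(s)=\#\{r:l_r<s\}$ and $\sigma_s=(-1)^{\ell(s)}\in\{+,-\}$.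 Then $(w_s,w'_s)\in\{(\sigma_s,\bullet),(\bullet,-\sigma_s)\}$. Terms whose faces have the wrong dimensions for $\alpha$ or $\beta$ vanish. *)

theory Defs
  imports Main "HOL-Library.Z2"
begin

text \<open>Letters of subcell words: Pl = +, Mi = -, Bu = bullet.\<close>
datatype sgn = Pl | Mi | Bu

text \<open>A cell is given by its minimal corner x and the set S of spanned directions:
  the cell is the product of [x_j, x_j+1] for j in S and {x_j} for j not in S.\<close>
type_synonym cell = "(nat \<Rightarrow> int) \<times> nat set"

definition valid_cell :: "nat \<Rightarrow> cell \<Rightarrow> bool" where
  "valid_cell d c \<longleftrightarrow> snd c \<subseteq> {..<d} \<and> (\<forall>j\<ge>d. fst c j = 0)"

definition cdim :: "cell \<Rightarrow> nat" where
  "cdim c = card (snd c)"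

text \<open>Spanned directions i_1 < ... < i_k (0-based list).\<close>
definition dirs :: "cell \<Rightarrow> nat list" where
  "dirs c = sorted_list_of_set (snd c)"

definition face :: "cell \<Rightarrow> sgn list \<Rightarrow> cell" where
  "face c w =
     ((\<lambda>j. fst c j + (if \<exists>r<cdim c. dirs c ! r = j \<and> w ! r = Pl then 1 else 0)),
      {dirs c ! r | r. r < cdim c \<and> w ! r = Bu})"

definition words :: "nat \<Rightarrow> sgn list set" where
  "words k = {w. set w \<subseteq> {Pl, Mi, Bu} \<and> length w = k}"

definition cochain :: "nat \<Rightarrow> nat \<Rightarrow> (cell \<Rightarrow> bit) \<Rightarrow> bool" where
  "cochain d p \<alpha> \<longleftrightarrow> (\<forall>c. \<alpha> c \<noteq> 0 \<longrightarrow> valid_cell d c \<and> cdim c = p)"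

definition coboundary :: "(cell \<Rightarrow> bit) \<Rightarrow> cell \<Rightarrow> bit" where
  "coboundary \<alpha> c =
     (\<Sum>w\<in>{w \<in> words (cdim c). length (filter (\<lambda>a. a \<noteq> Bu) w) = 1}. \<alpha> (face c w))"

definition neg_sgn :: "sgn \<Rightarrow> sgn" where
  "neg_sgn a = (case a of Pl \<Rightarrow> Mi | Mi \<Rightarrow> Pl | Bu \<Rightarrow> Bu)"

text \<open>sigma_s = (-1)^(number of l_r < s); positions are 0-based.\<close>
definition sigma :: "nat set \<Rightarrow> nat \<Rightarrow> sgn" where
  "sigma L s = (if even (card {r \<in> L. r < s}) then Pl else Mi)"

definition cup_pairs :: "nat \<Rightarrow> nat set \<Rightarrow> (sgn list \<times> sgn list) set" where
  "cup_pairs k L = {(w, w'). w \<in> words k \<and> w' \<in> words k \<and>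
      (\<forall>s<k. if s \<in> L then w ! s = Bu \<and> w' ! s = Bu
             else (w ! s, w' ! s) \<in> {(sigma L s, Bu), (Bu, neg_sgn (sigma L s))})}"

text \<open>Higher cup product; terms with faces of wrong dimension vanish automatically
  since cochains are zero off their degree.\<close>
definition cup :: "nat \<Rightarrow> (cell \<Rightarrow> bit) \<Rightarrow> (cell \<Rightarrow> bit) \<Rightarrow> cell \<Rightarrow> bit" where
  "cup m \<alpha> \<beta> c =
     (\<Sum>L\<in>{L. L \<subseteq> {..<cdim c} \<and> card L = m}.
        \<Sum>(w, w')\<in>cup_pairs (cdim c) L. \<alpha> (face c w) * \<beta> (face c w'))"

end

theory Submission
  imports Defs
begin


lemma UNIV_sgn: "(UNIV :: sgn set) = {Pl, Mi, Bu}"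
  using sgn.exhaust by auto

lemma finite_sgn_UNIV: "finite (UNIV :: sgn set)"
  by (simp add: UNIV_sgn)

lemma finite_sgn_pairs[simp]: "finite (A :: (sgn \<times> sgn) set)"
proof -
  have "finite (UNIV :: (sgn \<times> sgn) set)"
    using finite_sgn_UNIV by (simp add: finite_Prod_UNIV)
  then show ?thesis by (rule finite_subset[rotated]) simp
qed

declare add_bit_eq_xor[simp del] mult_bit_eq_and[simp del]

lemma bit_add_self[simp]: "(x::bit) + x = 0"
  by (cases x) simp_all

lemma bit_add_self2[simp]: "(x::bit) + (x + y) = y"
  by (metis add.assoc add_0 bit_add_self)

definition W :: "nat set \<Rightarrow> (nat \<Rightarrow> sgn) set" where
  "W S = {\<phi>. \<forall>i. i \<notin> S \<longrightarrow> \<phi> i = Bu}"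

lemma finite_W: "finite S \<Longrightarrow> finite (W S)"
proof (induction S rule: finite_induct)
  case empty
  have "W {} = {\<lambda>_. Bu}" by (auto simp: W_def)
  then show ?case by simp
next
  case (insert i S)
  have "W (insert i S) \<subseteq> (\<lambda>(\<phi>, e). \<phi>(i := e)) ` (W S \<times> UNIV)"
  proof
    fix \<phi> assume "\<phi> \<in> W (insert i S)"
    then have "\<phi> = (\<lambda>(\<phi>, e). \<phi>(i := e)) (\<phi>(i := Bu), \<phi> i)" "(\<phi>(i := Bu), \<phi> i) \<in> W S \<times> UNIV"
      by (auto simp: W_def)
    then show "\<phi> \<in> (\<lambda>(\<phi>, e). \<phi>(i := e)) ` (W S \<times> UNIV)" by blast
  qed
  moreover have "finite (W S \<times> (UNIV :: sgn set))"
    using insert finite_sgn_UNIV by simp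
  ultimately show ?case using finite_subset by blast
qed

definition PP :: "nat set \<Rightarrow> (nat \<Rightarrow> (sgn \<times> sgn) set) \<Rightarrow> ((nat \<Rightarrow> sgn) \<times> (nat \<Rightarrow> sgn)) set" where
  "PP S P = {(\<phi>, \<psi>). \<phi> \<in> W S \<and> \<psi> \<in> W S \<and> (\<forall>i\<in>S. (\<phi> i, \<psi> i) \<in> P i)}"

lemma finite_PP: "finite S \<Longrightarrow> finite (PP S P)"
  by (rule finite_subset[of _ "W S \<times> W S"]) (auto simp: PP_def finite_W)

lemma PP_cong: "(\<And>i. i \<in> S \<Longrightarrow> P i = P' i) \<Longrightarrow> PP S P = PP S P'"
  by (auto simp: PP_def)

lemma PP_remove: "i \<notin> T \<Longrightarrow> PP T P = PP (insert i T) (P(i := {(Bu, Bu)}))"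
  by (auto simp: PP_def W_def)

lemma sum_PP_split:
  assumes "finite S" "i \<in> S"
  shows "sum f (PP S P) = (\<Sum>q\<in>P i. sum f (PP S (P(i := {q}))))"
proof -
  have eq: "PP S P = (\<Union>q\<in>P i. PP S (P(i := {q})))"
    using assms(2) by (auto simp: PP_def)
  show ?thesis unfolding eq
    apply (rule sum.UNION_disjoint)
      apply (simp_all add: finite_PP assms)
    using assms(2) apply (auto simp: PP_def)
    done
qed

lemma sum_PP_union:
  assumes "finite S" "i \<in> S" "A \<inter> B = {}"
  shows "sum f (PP S (P(i := A \<union> B))) = sum f (PP S (P(i := A))) + sum f (PP S (P(i := B)))"
  using assms
  by (simp add: sum_PP_split[of S i _ "P(i := A \<union> B)"] sum_PP_split[of S i _ "P(i := A)"]
      sum_PP_split[of S i _ "P(i := B)"] sum.union_disjoint)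

lemma sum_PP_relabel:
  assumes "i \<in> S" "P i = {q}"
  shows "(\<Sum>(\<phi>, \<psi>)\<in>PP S P. f (\<phi>(i := a)) (\<psi>(i := b))) = (\<Sum>(\<phi>, \<psi>)\<in>PP S (P(i := {(a, b)})). f \<phi> \<psi>)"
proof -
  let ?h = "\<lambda>(\<phi>::nat\<Rightarrow>sgn, \<psi>::nat\<Rightarrow>sgn). (\<phi>(i := a), \<psi>(i := b))"
  let ?g = "\<lambda>(\<phi>::nat\<Rightarrow>sgn, \<psi>::nat\<Rightarrow>sgn). (\<phi>(i := fst q), \<psi>(i := snd q))"
  have bij: "bij_betw ?h (PP S P) (PP S (P(i := {(a, b)})))"
  proof (rule bij_betw_byWitness[where f' = ?g])
    show "?h ` PP S P \<subseteq> PP S (P(i := {(a, b)}))"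
      using assms by (auto simp: PP_def W_def)
    show "?g ` PP S (P(i := {(a, b)})) \<subseteq> PP S P"
      using assms by (auto simp: PP_def W_def)
    show "\<forall>x\<in>PP S P. ?g (?h x) = x"
      using assms by (force simp: PP_def)
    show "\<forall>y\<in>PP S (P(i := {(a, b)})). ?h (?g y) = y"
      using assms by (force simp: PP_def)
  qed
  show ?thesis
    using sum.reindex_bij_betw[OF bij, of "\<lambda>(\<phi>, \<psi>). f \<phi> \<psi>"]
    by (simp add: case_prod_beta)
qed

lemma sum_PP_swap:
  "(\<Sum>(\<phi>, \<psi>)\<in>PP S P. f \<psi> \<phi>) = (\<Sum>(\<phi>, \<psi>)\<in>PP S (\<lambda>i. prod.swap ` P i). f \<phi> \<psi>)"
proof -
  have bij: "bij_betw prod.swap (PP S P) (PP S (\<lambda>i. prod.swap ` P i))"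
    by (rule bij_betw_byWitness[where f' = prod.swap]) (auto simp: PP_def)
  show ?thesis
    using sum.reindex_bij_betw[OF bij, of "\<lambda>(\<phi>, \<psi>). f \<phi> \<psi>"]
    by (simp add: case_prod_beta)
qed

lemma telescope:
  fixes g :: "nat \<Rightarrow> bit"
  assumes "finite F" "\<And>t. t \<notin> F \<Longrightarrow> g (Suc t) = g t"
  shows "(\<Sum>i\<in>{i\<in>F. i < n}. g (Suc i) + g i) = g n + g 0"
proof (induction n)
  case 0 then show ?case by simp
next
  case (Suc n)
  have eq: "{i\<in>F. i < Suc n} = (if n \<in> F then insert n {i\<in>F. i < n} else {i\<in>F. i < n})"
    by (auto simp: less_Suc_eq)
  show ?case
  proof (cases "n \<in> F")
    case True
    then have "(\<Sum>i\<in>{i\<in>F. i < Suc n}. g (Suc i) + g i) = (g (Suc n) + g n) + (g n + g 0)"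
      using eq Suc assms(1) by simp
    also have "\<dots> = g (Suc n) + g 0" by (metis add.assoc bit_add_self2)
    finally show ?thesis .
  next
    case False
    then show ?thesis using eq Suc assms(2)[of n] by simp
  qed
qed



definition cface :: "cell \<Rightarrow> (nat \<Rightarrow> sgn) \<Rightarrow> cell" where
  "cface c \<phi> = ((\<lambda>j. fst c j + (if j \<in> snd c \<and> \<phi> j = Pl then 1 else 0)), {j \<in> snd c. \<phi> j = Bu})"

lemma cface_comp: "cface (cface c \<phi>) \<psi> = cface c (\<lambda>i. if \<phi> i = Bu then \<psi> i else \<phi> i)"
  by (auto simp: cface_def fun_eq_iff)

lemma snd_cface: "snd (cface c \<phi>) = {j \<in> snd c. \<phi> j = Bu}"
  by (simp add: cface_def)

definition Bf :: "nat \<Rightarrow> sgn \<Rightarrow> nat \<Rightarrow> sgn" where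
  "Bf j e = (\<lambda>_. Bu)(j := e)"

definition cobS :: "(cell \<Rightarrow> bit) \<Rightarrow> cell \<Rightarrow> bit" where
  "cobS \<alpha> c = (\<Sum>j\<in>snd c. \<Sum>e\<in>{Pl, Mi}. \<alpha> (cface c (Bf j e)))"

definition R :: "nat set \<Rightarrow> nat \<Rightarrow> (sgn \<times> sgn) set" where
  "R L i = (if i \<in> L then {(Bu, Bu)} else {(sigma L i, Bu), (Bu, neg_sgn (sigma L i))})"

definition Ls :: "nat set \<Rightarrow> nat \<Rightarrow> nat set set" where
  "Ls S m = {L. L \<subseteq> S \<and> card L = m}"

lemma finite_Ls: "finite S \<Longrightarrow> finite (Ls S m)"
  by (rule finite_subset[of _ "Pow S"]) (auto simp: Ls_def)

definition cupS :: "nat \<Rightarrow> (cell \<Rightarrow> bit) \<Rightarrow> (cell \<Rightarrow> bit) \<Rightarrow> cell \<Rightarrow> bit" where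
  "cupS m \<alpha> \<beta> c = (\<Sum>L\<in>Ls (snd c) m. \<Sum>(\<phi>, \<psi>)\<in>PP (snd c) (R L). \<alpha> (cface c \<phi>) * \<beta> (cface c \<psi>))"

lemma sigma_cases: "sigma L s = Pl \<or> sigma L s = Mi"
  by (simp add: sigma_def)

lemma neg_sgn_simps[simp]: "neg_sgn Pl = Mi" "neg_sgn Mi = Pl" "neg_sgn Bu = Bu"
  by (simp_all add: neg_sgn_def)

lemma cobS_face:
  assumes "finite (snd c)"
  shows "cobS \<alpha> (cface c \<phi>) =
    (\<Sum>i\<in>snd c. if \<phi> i = Bu then (\<Sum>e\<in>{Pl, Mi}. \<alpha> (cface c (\<phi>(i := e)))) else 0)"
proof -
  have "cobS \<alpha> (cface c \<phi>) = (\<Sum>i\<in>{j \<in> snd c. \<phi> j = Bu}. \<Sum>e\<in>{Pl, Mi}. \<alpha> (cface c (\<phi>(i := e))))"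
    unfolding cobS_def snd_cface cface_comp
  proof (intro sum.cong refl)
    fix i e assume "i \<in> {j \<in> snd c. \<phi> j = Bu}"
    then have "(\<lambda>ia. if \<phi> ia = Bu then Bf i e ia else \<phi> ia) = \<phi>(i := e)"
      by (auto simp: Bf_def fun_eq_iff)
    then show "\<alpha> (cface c (\<lambda>ia. if \<phi> ia = Bu then Bf i e ia else \<phi> ia)) = \<alpha> (cface c (\<phi>(i := e)))"
      by simp
  qed
  then show ?thesis
    by (simp only: sum.inter_filter[OF assms])
qed

lemma sum_swap_pair: "(\<Sum>(x, y)\<in>A. \<Sum>e\<in>E. F x y e) = (\<Sum>e\<in>E. \<Sum>(x, y)\<in>A. F x y e)"
  unfolding case_prod_beta by (rule sum.swap)

lemma PP_single: "(\<phi>, \<psi>) \<in> PP S (P(i := {q})) \<Longrightarrow> i \<in> S \<Longrightarrow> \<phi> i = fst q \<and> \<psi> i = snd q"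
proof -
  assume a: "(\<phi>, \<psi>) \<in> PP S (P(i := {q}))" "i \<in> S"
  then have "(\<phi> i, \<psi> i) \<in> (P(i := {q})) i" unfolding PP_def by blast
  then show ?thesis by auto
qed

lemma sum_PP_point:
  assumes "finite S" "i \<in> S"
  shows "(\<Sum>(\<phi>, \<psi>)\<in>PP S P. h (\<phi> i) (\<psi> i) \<phi> \<psi>)
       = (\<Sum>q\<in>P i. \<Sum>(\<phi>, \<psi>)\<in>PP S (P(i := {q})). h (fst q) (snd q) \<phi> \<psi>)"
  apply (subst sum_PP_split[OF assms])
  apply (intro sum.cong refl)
  using assms(2) by (auto simp: PP_def)

lemma R1_local:
  assumes "finite S" "i \<in> S"
  shows "(\<Sum>(\<phi>, \<psi>)\<in>PP S P. if \<phi> i = Bu then (\<Sum>e\<in>E. f (\<phi>(i := e)) \<psi>) else 0)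
       = (\<Sum>q\<in>P i. if fst q = Bu then (\<Sum>e\<in>E. \<Sum>(\<phi>, \<psi>)\<in>PP S (P(i := {(e, snd q)})). f \<phi> \<psi>) else 0)"
proof -
  have "(\<Sum>(\<phi>, \<psi>)\<in>PP S P. if \<phi> i = Bu then (\<Sum>e\<in>E. f (\<phi>(i := e)) \<psi>) else 0)
      = (\<Sum>q\<in>P i. \<Sum>(\<phi>, \<psi>)\<in>PP S (P(i := {q})). if fst q = Bu then (\<Sum>e\<in>E. f (\<phi>(i := e)) \<psi>) else 0)"
    using sum_PP_point[OF assms, where h = "\<lambda>x y \<phi> \<psi>. if x = Bu then (\<Sum>e\<in>E. f (\<phi>(i := e)) \<psi>) else 0"]
    by simp
  also have "\<dots> = (\<Sum>q\<in>P i. if fst q = Bu then (\<Sum>e\<in>E. \<Sum>(\<phi>, \<psi>)\<in>PP S (P(i := {(e, snd q)})). f \<phi> \<psi>) else 0)"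
  proof (intro sum.cong refl)
    fix q assume q: "q \<in> P i"
    show "(\<Sum>(\<phi>, \<psi>)\<in>PP S (P(i := {q})). if fst q = Bu then (\<Sum>e\<in>E. f (\<phi>(i := e)) \<psi>) else 0)
        = (if fst q = Bu then (\<Sum>e\<in>E. \<Sum>(\<phi>, \<psi>)\<in>PP S (P(i := {(e, snd q)})). f \<phi> \<psi>) else 0)"
    proof (cases "fst q = Bu")
      case True
      have "(\<Sum>(\<phi>, \<psi>)\<in>PP S (P(i := {q})). \<Sum>e\<in>E. f (\<phi>(i := e)) \<psi>)
          = (\<Sum>e\<in>E. \<Sum>(\<phi>, \<psi>)\<in>PP S (P(i := {q})). f (\<phi>(i := e)) (\<psi>(i := snd q)))"
        unfolding sum_swap_pair
        apply (intro sum.cong refl)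
        apply clarify
        apply (drule PP_single[OF _ assms(2)])
        by (simp add: fun_upd_idem)
      also have "\<dots> = (\<Sum>e\<in>E. \<Sum>(\<phi>, \<psi>)\<in>PP S (P(i := {(e, snd q)})). f \<phi> \<psi>)"
        using sum_PP_relabel[OF assms(2), of "P(i := {q})" q f] by simp
      finally show ?thesis using True by simp
    qed simp
  qed
  finally show ?thesis .
qed

lemma R2_local:
  assumes "finite S" "i \<in> S"
  shows "(\<Sum>(\<phi>, \<psi>)\<in>PP S P. if \<psi> i = Bu then (\<Sum>e\<in>E. f \<phi> (\<psi>(i := e))) else 0)
       = (\<Sum>q\<in>P i. if snd q = Bu then (\<Sum>e\<in>E. \<Sum>(\<phi>, \<psi>)\<in>PP S (P(i := {(fst q, e)})). f \<phi> \<psi>) else 0)"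
proof -
  have "(\<Sum>(\<phi>, \<psi>)\<in>PP S P. if \<psi> i = Bu then (\<Sum>e\<in>E. f \<phi> (\<psi>(i := e))) else 0)
      = (\<Sum>q\<in>P i. \<Sum>(\<phi>, \<psi>)\<in>PP S (P(i := {q})). if snd q = Bu then (\<Sum>e\<in>E. f \<phi> (\<psi>(i := e))) else 0)"
    using sum_PP_point[OF assms, where h = "\<lambda>x y \<phi> \<psi>. if y = Bu then (\<Sum>e\<in>E. f \<phi> (\<psi>(i := e))) else 0"]
    by simp
  also have "\<dots> = (\<Sum>q\<in>P i. if snd q = Bu then (\<Sum>e\<in>E. \<Sum>(\<phi>, \<psi>)\<in>PP S (P(i := {(fst q, e)})). f \<phi> \<psi>) else 0)"
  proof (intro sum.cong refl)
    fix q assume q: "q \<in> P i"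
    show "(\<Sum>(\<phi>, \<psi>)\<in>PP S (P(i := {q})). if snd q = Bu then (\<Sum>e\<in>E. f \<phi> (\<psi>(i := e))) else 0)
        = (if snd q = Bu then (\<Sum>e\<in>E. \<Sum>(\<phi>, \<psi>)\<in>PP S (P(i := {(fst q, e)})). f \<phi> \<psi>) else 0)"
    proof (cases "snd q = Bu")
      case True
      have "(\<Sum>(\<phi>, \<psi>)\<in>PP S (P(i := {q})). \<Sum>e\<in>E. f \<phi> (\<psi>(i := e)))
          = (\<Sum>e\<in>E. \<Sum>(\<phi>, \<psi>)\<in>PP S (P(i := {q})). f (\<phi>(i := fst q)) (\<psi>(i := e)))"
        unfolding sum_swap_pair
        apply (intro sum.cong refl)
        apply clarify
        apply (drule PP_single[OF _ assms(2)])
        by (simp add: fun_upd_idem)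
      also have "\<dots> = (\<Sum>e\<in>E. \<Sum>(\<phi>, \<psi>)\<in>PP S (P(i := {(fst q, e)})). f \<phi> \<psi>)"
        using sum_PP_relabel[OF assms(2), of "P(i := {q})" q f] by simp
      finally show ?thesis using True by simp
    qed simp
  qed
  finally show ?thesis .
qed

definition U4 :: "(sgn \<times> sgn) set" where
  "U4 = {(Pl, Bu), (Mi, Bu), (Bu, Pl), (Bu, Mi)}"

lemma local_id:
  fixes sp :: "(nat \<Rightarrow> (sgn \<times> sgn) set) \<Rightarrow> bit"
  assumes split: "sp (P(i := U4)) = (\<Sum>q\<in>U4. sp (P(i := {q})))"
  shows "(if i \<notin> L then (\<Sum>e\<in>{Pl, Mi}. sp (P(i := {(e, e)}))) else 0)
     + (\<Sum>q\<in>R L i. if fst q = Bu then (\<Sum>e\<in>{Pl, Mi}. sp (P(i := {(e, snd q)}))) else 0)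
     + (\<Sum>q\<in>R L i. if snd q = Bu then (\<Sum>e\<in>{Pl, Mi}. sp (P(i := {(fst q, e)}))) else 0)
     = (if i \<in> L then sp (P(i := U4)) else 0)"
proof (cases "i \<in> L")
  case True
  then show ?thesis
    by (simp add: R_def split[unfolded U4_def] U4_def ac_simps)
next
  case False
  then show ?thesis
    using sigma_cases[of L i]
    by (auto simp: R_def ac_simps)
qed



lemma reindex_Ls:
  assumes "finite S" "m \<ge> 1"
  shows "(\<Sum>L\<in>Ls S m. \<Sum>i\<in>L. f L i) = (\<Sum>L0\<in>Ls S (m - 1). \<Sum>i\<in>S - L0. f (insert i L0) i)"
proof -
  have finL: "finite L" if "L \<in> Ls S k" for L k
    using that assms(1) by (auto simp: Ls_def intro: finite_subset)
  have "(\<Sum>L\<in>Ls S m. \<Sum>i\<in>L. f L i) = (\<Sum>(L, i)\<in>Sigma (Ls S m) (\<lambda>L. L). f L i)"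
    by (rule sum.Sigma) (auto simp: finite_Ls assms finL)
  also have "\<dots> = (\<Sum>(L0, i)\<in>Sigma (Ls S (m - 1)) (\<lambda>L0. S - L0). f (insert i L0) i)"
  proof -
    let ?h = "\<lambda>(L0::nat set, i::nat). (insert i L0, i)"
    have bij: "bij_betw ?h (Sigma (Ls S (m - 1)) (\<lambda>L0. S - L0)) (Sigma (Ls S m) (\<lambda>L. L))"
    proof (rule bij_betw_byWitness[where f' = "\<lambda>(L, i). (L - {i}, i)"])
      show "\<forall>a\<in>Sigma (Ls S (m - 1)) (\<lambda>L0. S - L0). (\<lambda>(L, i). (L - {i}, i)) (?h a) = a"
        by auto
      show "\<forall>a\<in>Sigma (Ls S m) (\<lambda>L. L). ?h ((\<lambda>(L, i). (L - {i}, i)) a) = a"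
        by auto
      have finS: "\<And>L. L \<subseteq> S \<Longrightarrow> finite L" using assms(1) finite_subset by blast
      show "?h ` Sigma (Ls S (m - 1)) (\<lambda>L0. S - L0) \<subseteq> Sigma (Ls S m) (\<lambda>L. L)"
        using assms(2) by (auto simp: Ls_def card_insert_if finS)
      show "(\<lambda>(L, i). (L - {i}, i)) ` Sigma (Ls S m) (\<lambda>L. L) \<subseteq> Sigma (Ls S (m - 1)) (\<lambda>L0. S - L0)"
        by (auto simp: Ls_def finS)
    qed
    show ?thesis
      using sum.reindex_bij_betw[OF bij, of "\<lambda>(L, i). f L i"] by (simp add: case_prod_beta)
  qed
  also have "\<dots> = (\<Sum>L0\<in>Ls S (m - 1). \<Sum>i\<in>S - L0. f (insert i L0) i)"
    by (rule sum.Sigma[symmetric]) (auto simp: finite_Ls assms)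
  finally show ?thesis .
qed

lemma sigma_insert:
  assumes "finite L0" "i \<notin> L0"
  shows "sigma (insert i L0) s = (if i < s then neg_sgn (sigma L0 s) else sigma L0 s)"
proof (cases "i < s")
  case True
  then have "{r \<in> insert i L0. r < s} = insert i {r \<in> L0. r < s}" by auto
  moreover have "card (insert i {r \<in> L0. r < s}) = Suc (card {r \<in> L0. r < s})"
    using assms by simp
  ultimately show ?thesis using True by (simp add: sigma_def neg_sgn_def)
next
  case False
  then have "{r \<in> insert i L0. r < s} = {r \<in> L0. r < s}" by auto
  then show ?thesis using False by (simp add: sigma_def)
qed

lemma L0_id:
  fixes f :: "((nat \<Rightarrow> sgn) \<times> (nat \<Rightarrow> sgn)) \<Rightarrow> bit"
  assumes "finite S" "L0 \<subseteq> S"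
  shows "(\<Sum>i\<in>S - L0. sum f (PP S ((R (insert i L0))(i := U4))))
       = sum f (PP S (R L0)) + sum f (PP S (\<lambda>s. prod.swap ` R L0 s))"
proof -
  have finL0: "finite L0" using assms finite_subset by blast
  define G where "G t s = (if s \<in> L0 then {(Bu, Bu)} else if s < t then R L0 s else prod.swap ` R L0 s)" for t s
  define g where "g t = sum f (PP S (G t))" for t
  have step: "sum f (PP S ((R (insert i L0))(i := U4))) = g (Suc i) + g i" if i: "i \<in> S - L0" for i
  proof -
    have e1: "PP S ((R (insert i L0))(i := U4)) = PP S ((G i)(i := U4))"
    proof (rule PP_cong)
      fix s assume "s \<in> S"
      show "((R (insert i L0))(i := U4)) s = ((G i)(i := U4)) s"
        using i sigma_cases[of L0 s]
        by (auto simp: G_def R_def sigma_insert[OF finL0])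
    qed
    have e2: "U4 = R L0 i \<union> prod.swap ` R L0 i"
      using i sigma_cases[of L0 i] by (auto simp: U4_def R_def)
    have disj: "R L0 i \<inter> prod.swap ` R L0 i = {}"
      using i sigma_cases[of L0 i] by (auto simp: R_def)
    have e3: "PP S ((G i)(i := R L0 i)) = PP S (G (Suc i))"
      by (rule PP_cong) (use i in \<open>auto simp: G_def\<close>)
    have e4: "(G i)(i := prod.swap ` R L0 i) = G i"
      using i by (auto simp: G_def fun_eq_iff)
    have A: "sum f (PP S ((G i)(i := U4)))
        = sum f (PP S ((G i)(i := R L0 i))) + sum f (PP S ((G i)(i := prod.swap ` R L0 i)))"
      unfolding e2 by (rule sum_PP_union[OF assms(1) _ disj]) (use i in auto)
    then show ?thesis by (simp add: e1 g_def e3 e4)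
  qed
  have const: "g (Suc t) = g t" if "t \<notin> S - L0" for t
    unfolding g_def
    by (rule arg_cong[where f = "sum f"], rule PP_cong) (use that in \<open>auto simp: G_def less_Suc_eq\<close>)
  obtain n where n: "S \<subseteq> {..<n}" using assms(1) finite_nat_set_iff_bounded by (metis lessThan_iff subsetI)
  have "(\<Sum>i\<in>S - L0. sum f (PP S ((R (insert i L0))(i := U4)))) = (\<Sum>i\<in>{i \<in> S - L0. i < n}. g (Suc i) + g i)"
  proof -
    have "{i \<in> S - L0. i < n} = S - L0" using n by auto
    then show ?thesis using step by simp
  qed
  also have "\<dots> = g n + g 0"
    using telescope[of "S - L0" g n] assms(1) const by auto
  also have "g n = sum f (PP S (R L0))"
    unfolding g_def by (rule arg_cong[where f = "sum f"], rule PP_cong) (use n in \<open>auto simp: G_def R_def\<close>)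
  also have "g 0 = sum f (PP S (\<lambda>s. prod.swap ` R L0 s))"
    unfolding g_def by (rule arg_cong[where f = "sum f"], rule PP_cong) (auto simp: G_def R_def)
  finally show ?thesis .
qed



lemma bit_rearrange: "(x::bit) + y + z = w \<Longrightarrow> x = y + z + w"
  by (cases x; cases y; cases z; cases w) simp_all

lemma main_set:
  assumes fin: "finite (snd c)" and m: "m \<ge> 1"
  shows "cobS (cupS m \<alpha> \<beta>) c = cupS m (cobS \<alpha>) \<beta> c + cupS m \<alpha> (cobS \<beta>) c
           + cupS (m - 1) \<alpha> \<beta> c + cupS (m - 1) \<beta> \<alpha> c"
proof -
  define S where "S = snd c"
  have finS: "finite S" using fin by (simp add: S_def)
  define a where "a \<phi> = \<alpha> (cface c \<phi>)" for \<phi>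
  define b where "b \<phi> = \<beta> (cface c \<phi>)" for \<phi>
  define f where "f = (\<lambda>(\<phi>, \<psi>). a \<phi> * b \<psi>)"
  define sp where "sp P = sum f (PP S P)" for P
  have sp_eq: "(\<Sum>(\<phi>, \<psi>)\<in>PP S P. a \<phi> * b \<psi>) = sp P" for P
    by (simp add: sp_def f_def cong: if_cong)

  have LHS: "cobS (cupS m \<alpha> \<beta>) c = (\<Sum>j\<in>S. \<Sum>e\<in>{Pl, Mi}. \<Sum>L\<in>Ls (S - {j}) m. sp ((R L)(j := {(e, e)})))"
    unfolding cobS_def S_def[symmetric]
  proof (intro sum.cong refl)
    fix j e assume j: "j \<in> S" and e: "e \<in> {Pl, Mi}"
    have sndc: "snd (cface c (Bf j e)) = S - {j}" using e by (auto simp: snd_cface Bf_def S_def)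
    have comp: "(\<lambda>i. if Bf j e i = Bu then \<phi> i else Bf j e i) = \<phi>(j := e)" for \<phi>
      using e by (auto simp: Bf_def fun_eq_iff)
    have ins: "insert j (S - {j}) = S" using j by auto
    show "cupS m \<alpha> \<beta> (cface c (Bf j e)) = (\<Sum>L\<in>Ls (S - {j}) m. sp ((R L)(j := {(e, e)})))"
      unfolding cupS_def sndc
    proof (intro sum.cong refl)
      fix L
      have "(\<Sum>(\<phi>, \<psi>)\<in>PP (S - {j}) (R L). \<alpha> (cface (cface c (Bf j e)) \<phi>) * \<beta> (cface (cface c (Bf j e)) \<psi>))
          = (\<Sum>(\<phi>, \<psi>)\<in>PP S ((R L)(j := {(Bu, Bu)})). a (\<phi>(j := e)) * b (\<psi>(j := e)))"
        using PP_remove[of j "S - {j}" "R L", unfolded ins] by (simp add: cface_comp comp a_def b_def)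
      also have "\<dots> = sp ((R L)(j := {(e, e)}))"
        using sum_PP_relabel[of j S "(R L)(j := {(Bu, Bu)})" "(Bu, Bu)" "\<lambda>\<phi> \<psi>. a \<phi> * b \<psi>" e e] j
        by (simp add: sp_eq)
      finally show "(\<Sum>(\<phi>, \<psi>)\<in>PP (S - {j}) (R L). \<alpha> (cface (cface c (Bf j e)) \<phi>) * \<beta> (cface (cface c (Bf j e)) \<psi>))
          = sp ((R L)(j := {(e, e)}))" .
    qed
  qed
  have LHS2: "(\<Sum>j\<in>S. \<Sum>e\<in>{Pl, Mi}. \<Sum>L\<in>Ls (S - {j}) m. sp ((R L)(j := {(e, e)})))
      = (\<Sum>L\<in>Ls S m. \<Sum>i\<in>S. if i \<notin> L then (\<Sum>e\<in>{Pl, Mi}. sp ((R L)(i := {(e, e)}))) else 0)"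
  proof -
    have Lsj: "Ls (S - {j}) m = {L \<in> Ls S m. j \<notin> L}" for j by (auto simp: Ls_def)
    have "(\<Sum>j\<in>S. \<Sum>e\<in>{Pl, Mi}. \<Sum>L\<in>Ls (S - {j}) m. sp ((R L)(j := {(e, e)})))
        = (\<Sum>j\<in>S. \<Sum>e\<in>{Pl, Mi}. \<Sum>L\<in>Ls S m. if j \<notin> L then sp ((R L)(j := {(e, e)})) else 0)"
      unfolding Lsj by (simp only: sum.inter_filter[OF finite_Ls[OF finS]])
    also have "\<dots> = (\<Sum>j\<in>S. \<Sum>L\<in>Ls S m. \<Sum>e\<in>{Pl, Mi}. if j \<notin> L then sp ((R L)(j := {(e, e)})) else 0)"
      by (intro sum.cong refl) (rule sum.swap)
    also have "\<dots> = (\<Sum>j\<in>S. \<Sum>L\<in>Ls S m. if j \<notin> L then (\<Sum>e\<in>{Pl, Mi}. sp ((R L)(j := {(e, e)}))) else 0)"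
      by (intro sum.cong refl) simp
    also have "\<dots> = (\<Sum>L\<in>Ls S m. \<Sum>i\<in>S. if i \<notin> L then (\<Sum>e\<in>{Pl, Mi}. sp ((R L)(i := {(e, e)}))) else 0)"
      by (rule sum.swap)
    finally show ?thesis .
  qed

  define X1 where "X1 L i = (\<Sum>q\<in>R L i. if fst q = Bu then (\<Sum>e\<in>{Pl, Mi}. sp ((R L)(i := {(e, snd q)}))) else 0)" for L i
  define X2 where "X2 L i = (\<Sum>q\<in>R L i. if snd q = Bu then (\<Sum>e\<in>{Pl, Mi}. sp ((R L)(i := {(fst q, e)}))) else 0)" for L i

  have RHS1: "cupS m (cobS \<alpha>) \<beta> c = (\<Sum>L\<in>Ls S m. \<Sum>i\<in>S. X1 L i)"
    unfolding cupS_def S_def[symmetric]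
  proof (intro sum.cong refl)
    fix L
    have "(\<Sum>(\<phi>, \<psi>)\<in>PP S (R L). cobS \<alpha> (cface c \<phi>) * \<beta> (cface c \<psi>))
        = (\<Sum>(\<phi>, \<psi>)\<in>PP S (R L). \<Sum>i\<in>S. if \<phi> i = Bu then (\<Sum>e\<in>{Pl, Mi}. a (\<phi>(i := e)) * b \<psi>) else 0)"
      by (intro sum.cong refl)
        (auto simp: cobS_face[OF fin] S_def a_def b_def sum_distrib_right distrib_right if_distrib[where f = "\<lambda>x. x * _"] intro!: sum.cong)
    also have "\<dots> = (\<Sum>i\<in>S. \<Sum>(\<phi>, \<psi>)\<in>PP S (R L). if \<phi> i = Bu then (\<Sum>e\<in>{Pl, Mi}. a (\<phi>(i := e)) * b \<psi>) else 0)"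
      by (rule sum_swap_pair)
    also have "\<dots> = (\<Sum>i\<in>S. X1 L i)"
      unfolding X1_def
      apply (intro sum.cong refl)
      apply (simp only: R1_local[OF finS, where P = "R L" and f = "\<lambda>\<phi> \<psi>. a \<phi> * b \<psi>"])
      apply (simp add: sp_def f_def cong: if_cong)
      done
    finally show "(\<Sum>(\<phi>, \<psi>)\<in>PP S (R L). cobS \<alpha> (cface c \<phi>) * \<beta> (cface c \<psi>)) = (\<Sum>i\<in>S. X1 L i)" .
  qed

  have RHS2: "cupS m \<alpha> (cobS \<beta>) c = (\<Sum>L\<in>Ls S m. \<Sum>i\<in>S. X2 L i)"
    unfolding cupS_def S_def[symmetric]
  proof (intro sum.cong refl)
    fix L
    have "(\<Sum>(\<phi>, \<psi>)\<in>PP S (R L). \<alpha> (cface c \<phi>) * cobS \<beta> (cface c \<psi>))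
        = (\<Sum>(\<phi>, \<psi>)\<in>PP S (R L). \<Sum>i\<in>S. if \<psi> i = Bu then (\<Sum>e\<in>{Pl, Mi}. a \<phi> * b (\<psi>(i := e))) else 0)"
      by (intro sum.cong refl)
        (auto simp: cobS_face[OF fin] S_def a_def b_def sum_distrib_left distrib_left if_distrib[where f = "\<lambda>x. _ * x"] intro!: sum.cong)
    also have "\<dots> = (\<Sum>i\<in>S. \<Sum>(\<phi>, \<psi>)\<in>PP S (R L). if \<psi> i = Bu then (\<Sum>e\<in>{Pl, Mi}. a \<phi> * b (\<psi>(i := e))) else 0)"
      by (rule sum_swap_pair)
    also have "\<dots> = (\<Sum>i\<in>S. X2 L i)"
      unfolding X2_def
      apply (intro sum.cong refl)
      apply (simp only: R2_local[OF finS, where P = "R L" and f = "\<lambda>\<phi> \<psi>. a \<phi> * b \<psi>"])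
      apply (simp add: sp_def f_def cong: if_cong)
      done
    finally show "(\<Sum>(\<phi>, \<psi>)\<in>PP S (R L). \<alpha> (cface c \<phi>) * cobS \<beta> (cface c \<psi>)) = (\<Sum>i\<in>S. X2 L i)" .
  qed
  have comb: "(if i \<notin> L then (\<Sum>e\<in>{Pl, Mi}. sp ((R L)(i := {(e, e)}))) else 0) + X1 L i + X2 L i
      = (if i \<in> L then sp ((R L)(i := U4)) else 0)" if i: "i \<in> S" for L i
    unfolding X1_def X2_def
    by (rule local_id[where P = "R L" and sp = sp]) (use sum_PP_split[OF finS i, of f "(R L)(i := U4)"] in \<open>simp add: sp_def\<close>)

  have total: "cobS (cupS m \<alpha> \<beta>) c + cupS m (cobS \<alpha>) \<beta> c + cupS m \<alpha> (cobS \<beta>) c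
      = cupS (m - 1) \<alpha> \<beta> c + cupS (m - 1) \<beta> \<alpha> c"
  proof -
    have "cobS (cupS m \<alpha> \<beta>) c + cupS m (cobS \<alpha>) \<beta> c + cupS m \<alpha> (cobS \<beta>) c
        = (\<Sum>L\<in>Ls S m. \<Sum>i\<in>S. (if i \<notin> L then (\<Sum>e\<in>{Pl, Mi}. sp ((R L)(i := {(e, e)}))) else 0) + X1 L i + X2 L i)"
      unfolding LHS LHS2 RHS1 RHS2 by (simp only: sum.distrib)
    also have "\<dots> = (\<Sum>L\<in>Ls S m. \<Sum>i\<in>S. if i \<in> L then sp ((R L)(i := U4)) else 0)"
      by (intro sum.cong refl comb)
    also have "\<dots> = (\<Sum>L\<in>Ls S m. \<Sum>i\<in>L. sp ((R L)(i := U4)))"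
    proof (rule sum.cong[OF refl])
      fix L assume "L \<in> Ls S m"
      then have "{i \<in> S. i \<in> L} = L" by (auto simp: Ls_def)
      then show "(\<Sum>i\<in>S. if i \<in> L then sp ((R L)(i := U4)) else 0) = (\<Sum>i\<in>L. sp ((R L)(i := U4)))"
        using sum.inter_filter[OF finS, of "\<lambda>i. sp ((R L)(i := U4))" "\<lambda>i. i \<in> L"] by simp
    qed
    also have "\<dots> = (\<Sum>L0\<in>Ls S (m - 1). \<Sum>i\<in>S - L0. sp ((R (insert i L0))(i := U4)))"
      by (rule reindex_Ls[OF finS m])
    also have "\<dots> = (\<Sum>L0\<in>Ls S (m - 1). sp (R L0) + sp (\<lambda>s. prod.swap ` R L0 s))"
      by (intro sum.cong refl) (auto simp: sp_def L0_id[OF finS] Ls_def)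
    also have "\<dots> = cupS (m - 1) \<alpha> \<beta> c + cupS (m - 1) \<beta> \<alpha> c"
    proof -
      have "cupS (m - 1) \<alpha> \<beta> c = (\<Sum>L0\<in>Ls S (m - 1). sp (R L0))"
        unfolding cupS_def S_def[symmetric] by (simp add: sp_eq[symmetric] a_def b_def)
      moreover have "cupS (m - 1) \<beta> \<alpha> c = (\<Sum>L0\<in>Ls S (m - 1). sp (\<lambda>s. prod.swap ` R L0 s))"
        unfolding cupS_def S_def[symmetric]
      proof (intro sum.cong refl)
        fix L0
        show "(\<Sum>(\<phi>, \<psi>)\<in>PP S (R L0). \<beta> (cface c \<phi>) * \<alpha> (cface c \<psi>)) = sp (\<lambda>s. prod.swap ` R L0 s)"
          using sum_PP_swap[of "\<lambda>x y. a x * b y" S "R L0"]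
          by (simp add: sp_def f_def a_def b_def mult.commute)
      qed
      ultimately show ?thesis by (simp add: sum.distrib)
    qed
    finally show ?thesis .
  qed
  show ?thesis
    using bit_rearrange[OF total] by (simp add: add.assoc)
qed



lemma words_eq: "words k = {w. length w = k}"
  unfolding words_def using UNIV_sgn by auto

lemma dirs_facts:
  assumes "finite (snd c)"
  shows "set (dirs c) = snd c" "distinct (dirs c)" "length (dirs c) = cdim c" "sorted_wrt (<) (dirs c)"
  using assms by (simp_all add: dirs_def cdim_def)

lemma dirs_mono:
  fixes D :: "nat list"
  assumes "sorted_wrt (<) D" "r < length D" "s < length D"
  shows "(D ! r < D ! s) \<longleftrightarrow> r < s"
proof -
  consider "r < s" | "r = s" | "s < r" by linarith
  then show ?thesis
  proof cases
    case 1 then show ?thesis using sorted_wrt_nth_less[OF assms(1) 1 assms(3)] by simp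
  next
    case 2 then show ?thesis by simp
  next
    case 3 then show ?thesis using sorted_wrt_nth_less[OF assms(1) 3 assms(2)] by simp
  qed
qed

lemma face_map:
  assumes "finite (snd c)"
  shows "face c (map \<phi> (dirs c)) = cface c \<phi>"
proof -
  note df = dirs_facts[OF assms]
  have 1: "(\<exists>r<cdim c. dirs c ! r = j \<and> map \<phi> (dirs c) ! r = Pl) \<longleftrightarrow> (j \<in> snd c \<and> \<phi> j = Pl)" for j
    using df(1,3)[symmetric] by (auto simp: in_set_conv_nth)
  have 2: "{dirs c ! r | r. r < cdim c \<and> map \<phi> (dirs c) ! r = Bu} = {j \<in> snd c. \<phi> j = Bu}"
    using df(1,3)[symmetric] by (auto simp: in_set_conv_nth)
  show ?thesis unfolding face_def cface_def 1 2 by simp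
qed

lemma exists_fun:
  "distinct D \<Longrightarrow> length w = length D \<Longrightarrow> \<exists>\<phi>. map \<phi> D = w \<and> (\<forall>i. i \<notin> set D \<longrightarrow> \<phi> i = Bu)"
proof (induction D arbitrary: w)
  case Nil then show ?case by auto
next
  case (Cons d D)
  then obtain x w' where w: "w = x # w'" "length w' = length D" by (cases w) auto
  with Cons obtain \<phi> where \<phi>: "map \<phi> D = w'" "\<forall>i. i \<notin> set D \<longrightarrow> \<phi> i = Bu" by auto
  have "map (\<phi>(d := x)) D = w'" using \<phi>(1) Cons.prems(1) by simp
  then show ?case using w \<phi>(2) by (intro exI[of _ "\<phi>(d := x)"]) auto
qed

lemma bij_map:
  assumes "finite (snd c)"
  shows "bij_betw (\<lambda>\<phi>. map \<phi> (dirs c)) (W (snd c)) (words (cdim c))"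
proof -
  note df = dirs_facts[OF assms]
  show ?thesis unfolding bij_betw_def
  proof
    show "inj_on (\<lambda>\<phi>. map \<phi> (dirs c)) (W (snd c))"
    proof (rule inj_onI)
      fix \<phi> \<psi> assume "\<phi> \<in> W (snd c)" "\<psi> \<in> W (snd c)" "map \<phi> (dirs c) = map \<psi> (dirs c)"
      then show "\<phi> = \<psi>" using df(1) by (auto simp: W_def fun_eq_iff map_eq_conv)
    qed
    show "(\<lambda>\<phi>. map \<phi> (dirs c)) ` W (snd c) = words (cdim c)"
    proof
      show "(\<lambda>\<phi>. map \<phi> (dirs c)) ` W (snd c) \<subseteq> words (cdim c)" using df by (auto simp: words_eq)
      show "words (cdim c) \<subseteq> (\<lambda>\<phi>. map \<phi> (dirs c)) ` W (snd c)"
      proof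
        fix w assume "w \<in> words (cdim c)"
        then obtain \<phi> where "map \<phi> (dirs c) = w" "\<forall>i. i \<notin> set (dirs c) \<longrightarrow> \<phi> i = Bu"
          using exists_fun[OF df(2)] df(3) by (auto simp: words_eq)
        then show "w \<in> (\<lambda>\<phi>. map \<phi> (dirs c)) ` W (snd c)" using df(1) by (auto simp: W_def)
      qed
    qed
  qed
qed

lemma bij_betw_restrict_pred:
  assumes "bij_betw h A B" "\<And>x. x \<in> A \<Longrightarrow> Q (h x) \<longleftrightarrow> P x"
  shows "bij_betw h {x \<in> A. P x} {y \<in> B. Q y}"
  using assms unfolding bij_betw_def by (auto intro: inj_on_subset)

lemma bij_betw_pairs:
  assumes "bij_betw h A B" "\<And>x y. x \<in> A \<Longrightarrow> y \<in> A \<Longrightarrow> Q (h x) (h y) \<longleftrightarrow> P x y"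
  shows "bij_betw (\<lambda>(x, y). (h x, h y)) {(x, y). x \<in> A \<and> y \<in> A \<and> P x y} {(u, v). u \<in> B \<and> v \<in> B \<and> Q u v}"
proof -
  have inj: "inj_on h A" and im: "h ` A = B" using assms(1) by (auto simp: bij_betw_def)
  show ?thesis unfolding bij_betw_def
  proof
    show "inj_on (\<lambda>(x, y). (h x, h y)) {(x, y). x \<in> A \<and> y \<in> A \<and> P x y}"
      using inj by (auto simp: inj_on_def)
    show "(\<lambda>(x, y). (h x, h y)) ` {(x, y). x \<in> A \<and> y \<in> A \<and> P x y} = {(u, v). u \<in> B \<and> v \<in> B \<and> Q u v}"
    proof
      show "(\<lambda>(x, y). (h x, h y)) ` {(x, y). x \<in> A \<and> y \<in> A \<and> P x y} \<subseteq> {(u, v). u \<in> B \<and> v \<in> B \<and> Q u v}"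
        using im assms(2) by auto
      show "{(u, v). u \<in> B \<and> v \<in> B \<and> Q u v} \<subseteq> (\<lambda>(x, y). (h x, h y)) ` {(x, y). x \<in> A \<and> y \<in> A \<and> P x y}"
      proof clarify
        fix u v assume "u \<in> B" "v \<in> B" "Q u v"
        then obtain x y where "x \<in> A" "y \<in> A" "u = h x" "v = h y" using im by blast
        then show "(u, v) \<in> (\<lambda>(x, y). (h x, h y)) ` {(x, y). x \<in> A \<and> y \<in> A \<and> P x y}"
          using assms(2) \<open>Q u v\<close> by force
      qed
    qed
  qed
qed



lemma T1:
  assumes fin: "finite (snd c)"
  shows "coboundary \<alpha> c = cobS \<alpha> c"
proof -
  note df = dirs_facts[OF fin]
  let ?h = "\<lambda>\<phi>. map \<phi> (dirs c)"
  let ?A = "{\<phi> \<in> W (snd c). card {i \<in> snd c. \<phi> i \<noteq> Bu} = 1}"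
  have bij1: "bij_betw ?h ?A {w \<in> words (cdim c). length (filter (\<lambda>a. a \<noteq> Bu) w) = 1}"
  proof (rule bij_betw_restrict_pred[OF bij_map[OF fin]])
    fix \<phi> assume "\<phi> \<in> W (snd c)"
    have "length (filter (\<lambda>a. a \<noteq> Bu) (map \<phi> (dirs c))) = card ({x. \<phi> x \<noteq> Bu} \<inter> set (dirs c))"
      using distinct_length_filter[OF df(2), of "\<lambda>i. \<phi> i \<noteq> Bu"] by (simp add: filter_map o_def)
    also have "{x. \<phi> x \<noteq> Bu} \<inter> set (dirs c) = {i \<in> snd c. \<phi> i \<noteq> Bu}" using df(1) by auto
    finally show "(length (filter (\<lambda>a. a \<noteq> Bu) (?h \<phi>)) = 1) \<longleftrightarrow> (card {i \<in> snd c. \<phi> i \<noteq> Bu} = 1)"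
      by simp
  qed
  have "coboundary \<alpha> c = (\<Sum>\<phi>\<in>?A. \<alpha> (face c (?h \<phi>)))"
    unfolding coboundary_def using sum.reindex_bij_betw[OF bij1, of "\<lambda>w. \<alpha> (face c w)"] by simp
  also have "\<dots> = (\<Sum>\<phi>\<in>?A. \<alpha> (cface c \<phi>))" by (simp add: face_map[OF fin])
  also have "\<dots> = (\<Sum>x\<in>snd c \<times> {Pl, Mi}. \<alpha> (cface c ((\<lambda>(j, e). Bf j e) x)))"
  proof -
    have bij2: "bij_betw (\<lambda>(j, e). Bf j e) (snd c \<times> {Pl, Mi}) ?A"
      unfolding bij_betw_def
    proof
      show "inj_on (\<lambda>(j, e). Bf j e) (snd c \<times> {Pl, Mi})"
      proof (rule inj_onI, clarify)
        fix j e j' e' assume "j \<in> snd c" "e \<in> {Pl, Mi}" "j' \<in> snd c" "e' \<in> {Pl, Mi}" "Bf j e = Bf j' e'"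
        note h = this
        have "Bf j' e' j = e" using h(5) by (metis Bf_def fun_upd_same)
        then have jj: "j = j'" using h(2) by (auto simp: Bf_def split: if_splits)
        have "Bf j' e' j' = e" using h(5) jj by (metis Bf_def fun_upd_same)
        then show "j = j' \<and> e = e'" using jj by (simp add: Bf_def)
      qed
      show "(\<lambda>(j, e). Bf j e) ` (snd c \<times> {Pl, Mi}) = ?A"
      proof
        show "(\<lambda>(j, e). Bf j e) ` (snd c \<times> {Pl, Mi}) \<subseteq> ?A"
        proof
          fix x assume "x \<in> (\<lambda>(j, e). Bf j e) ` (snd c \<times> {Pl, Mi})"
          then obtain j e where x: "x = Bf j e" and j: "j \<in> snd c" and e: "e \<in> {Pl, Mi}" by auto
          have "{i \<in> snd c. Bf j e i \<noteq> Bu} = {j}" using j e by (auto simp: Bf_def)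
          then show "x \<in> ?A"
            using j x by (auto simp: Bf_def W_def)
        qed
        show "?A \<subseteq> (\<lambda>(j, e). Bf j e) ` (snd c \<times> {Pl, Mi})"
        proof
          fix \<phi> assume \<phi>: "\<phi> \<in> ?A"
          then obtain j where j: "{i \<in> snd c. \<phi> i \<noteq> Bu} = {j}" using card_1_singletonE by blast
          then have js: "j \<in> snd c" "\<phi> j \<noteq> Bu" by auto
          have "\<phi> = Bf j (\<phi> j)"
          proof
            fix i show "\<phi> i = Bf j (\<phi> j) i"
            proof (cases "i = j")
              case False
              then show ?thesis using j \<phi> by (cases "i \<in> snd c") (auto simp: Bf_def W_def)
            qed (simp add: Bf_def)
          qed
          moreover have "\<phi> j \<in> {Pl, Mi}" using js(2) by (cases "\<phi> j") auto
          ultimately show "\<phi> \<in> (\<lambda>(j, e). Bf j e) ` (snd c \<times> {Pl, Mi})"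
            using js(1) by (auto intro!: image_eqI[where x = "(j, \<phi> j)"])
        qed
      qed
    qed
    show ?thesis using sum.reindex_bij_betw[OF bij2, of "\<lambda>\<phi>. \<alpha> (cface c \<phi>)"] by simp
  qed
  also have "\<dots> = cobS \<alpha> c"
    unfolding cobS_def sum.cartesian_product by (rule sum.cong) auto
  finally show ?thesis .
qed

lemma T2:
  assumes fin: "finite (snd c)"
  shows "cup m \<alpha> \<beta> c = cupS m \<alpha> \<beta> c"
proof -
  note df = dirs_facts[OF fin]
  define D where "D = dirs c"
  define k where "k = cdim c"
  have bijn: "bij_betw (nth D) {..<k} (snd c)"
    using bij_betw_nth[OF df(2)] df(1,3) by (simp add: D_def k_def)
  have injn: "inj_on (nth D) {..<k}" using bij_betw_imp_inj_on[OF bijn] .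
  have bijL: "bij_betw (image (nth D)) {L. L \<subseteq> {..<k} \<and> card L = m} (Ls (snd c) m)"
  proof -
    have "bij_betw (image (nth D)) {L \<in> Pow {..<k}. card L = m} {L' \<in> Pow (snd c). card L' = m}"
      by (rule bij_betw_restrict_pred[OF bij_betw_Pow[OF bijn]])
        (auto simp: card_image inj_on_subset[OF injn])
    then show ?thesis by (simp add: Ls_def)
  qed
  have inner: "(\<Sum>(w, w')\<in>cup_pairs k L. \<alpha> (face c w) * \<beta> (face c w'))
      = (\<Sum>(\<phi>, \<psi>)\<in>PP (snd c) (R (nth D ` L)). \<alpha> (cface c \<phi>) * \<beta> (cface c \<psi>))"
    if L: "L \<subseteq> {..<k}" for L
  proof -
    have mem: "D ! s \<in> nth D ` L \<longleftrightarrow> s \<in> L" if "s < k" for s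
      using inj_on_image_mem_iff[OF injn, of s L] L that by auto
    have sig: "sigma (nth D ` L) (D ! s) = sigma L s" if s: "s < k" for s
    proof -
      have "{r \<in> nth D ` L. r < D ! s} = nth D ` {r \<in> L. r < s}"
        using dirs_mono[OF df(4)] L s df(3) by (auto simp: D_def k_def)
      moreover have "card (nth D ` {r \<in> L. r < s}) = card {r \<in> L. r < s}"
        by (rule card_image) (rule inj_on_subset[OF injn], use L in auto)
      ultimately show ?thesis by (simp add: sigma_def)
    qed
    have allS: "(\<forall>i\<in>snd c. P i) \<longleftrightarrow> (\<forall>s<k. P (D ! s))" for P
      unfolding D_def k_def df(1)[symmetric] df(3)[symmetric] by (auto simp: in_set_conv_nth) (use nth_mem in blast)
    have eqv: "(\<forall>s<k. if s \<in> L then map \<phi> D ! s = Bu \<and> map \<psi> D ! s = Bu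
                else (map \<phi> D ! s, map \<psi> D ! s) \<in> {(sigma L s, Bu), (Bu, neg_sgn (sigma L s))})
          \<longleftrightarrow> (\<forall>i\<in>snd c. (\<phi> i, \<psi> i) \<in> R (nth D ` L) i)" for \<phi> \<psi>
      unfolding allS using mem sig df(3) by (auto simp: R_def D_def k_def)
    have bijP: "bij_betw (\<lambda>(\<phi>, \<psi>). (map \<phi> D, map \<psi> D)) (PP (snd c) (R (nth D ` L))) (cup_pairs k L)"
      unfolding PP_def cup_pairs_def
      by (rule bij_betw_pairs[OF bij_map[OF fin, folded D_def k_def]]) (simp add: eqv)
    show ?thesis
      using sum.reindex_bij_betw[OF bijP, of "\<lambda>(w, w'). \<alpha> (face c w) * \<beta> (face c w')"]
      by (simp add: face_map[OF fin, folded D_def] case_prod_beta)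
  qed
  have "cup m \<alpha> \<beta> c = (\<Sum>L\<in>{L. L \<subseteq> {..<k} \<and> card L = m}.
           \<Sum>(\<phi>, \<psi>)\<in>PP (snd c) (R (nth D ` L)). \<alpha> (cface c \<phi>) * \<beta> (cface c \<psi>))"
    unfolding cup_def k_def[symmetric] by (intro sum.cong refl) (simp add: inner)
  also have "\<dots> = cupS m \<alpha> \<beta> c"
    unfolding cupS_def
    using sum.reindex_bij_betw[OF bijL, of "\<lambda>L'. \<Sum>(\<phi>, \<psi>)\<in>PP (snd c) (R L'). \<alpha> (cface c \<phi>) * \<beta> (cface c \<psi>)"]
    by simp
  finally show ?thesis .
qed

theorem proposition2:
  fixes d m p q :: nat and \<alpha> \<beta> :: "cell \<Rightarrow> bit" and c :: cell
  assumes "d \<ge> 1" and "m \<ge> 1"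
    and "cochain d p \<alpha>" and "cochain d q \<beta>"
    and "valid_cell d c"
  shows "coboundary (cup m \<alpha> \<beta>) c =
           cup m (coboundary \<alpha>) \<beta> c + cup m \<alpha> (coboundary \<beta>) c
           + cup (m - 1) \<alpha> \<beta> c + cup (m - 1) \<beta> \<alpha> c"
proof -
  have fin: "finite (snd c)" using assms(5) by (auto simp: valid_cell_def intro: finite_subset)
  have finf: "finite (snd (cface c \<phi>))" for \<phi> using fin by (simp add: snd_cface)
  have 1: "coboundary (cup m \<alpha> \<beta>) c = cobS (cupS m \<alpha> \<beta>) c"
    unfolding T1[OF fin] cobS_def by (simp add: T2[OF finf])
  have 2: "cup m (coboundary \<alpha>) \<beta> c = cupS m (cobS \<alpha>) \<beta> c"
    unfolding T2[OF fin] cupS_def by (simp add: T1[OF finf])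
  have 3: "cup m \<alpha> (coboundary \<beta>) c = cupS m \<alpha> (cobS \<beta>) c"
    unfolding T2[OF fin] cupS_def by (simp add: T1[OF finf])
  have 4: "cup (m - 1) \<alpha> \<beta> c = cupS (m - 1) \<alpha> \<beta> c" by (rule T2[OF fin])
  have 5: "cup (m - 1) \<beta> \<alpha> c = cupS (m - 1) \<beta> \<alpha> c" by (rule T2[OF fin])
  show ?thesis
    unfolding 1 2 3 4 5 using main_set[OF fin assms(2)] .
qed

end
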